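(* Let $C\ge2$, $\boldsymbol{M}^\star=\sqrt{\frac{C}{C-1}}\left(\boldsymbol{I}-\frac1C\mathbf{1}\mathbf{1}^\top\right)\in\mathbb{R}^{C\times C}$ with columns $\boldsymbol{\mu}^\star_1,\dots,\boldsymbol{\mu}^\star_C$. For $c\ne c'$ let $\mathcal{K}_{c,c'}=\{\boldsymbol{z}\in\mathbb{R}^C:\ (\boldsymbol{M}^\star(\boldsymbol{\mu}^\star_c+\boldsymbol{z}))(c')\ge(\boldsymbol{M}^\star(\boldsymbol{\mu}^\star_c+\boldsymbol{z}))(c)\}$, where $\boldsymbol{v}(k)$ denotes the $k$-th coordinate of $\boldsymbol{v}$, and let $\boldsymbol{z}^\star_{c,c'}$ be a minimizer of $\frac12\|\boldsymbol{z}\|_2^2$ over $\boldsymbol{z}\in\mathcal{K}_{c,c'}$. Then for all $c\ne c'$, $$\|\boldsymbol{z}^\star_{c,c'}\|_2=\frac12\|\boldsymbol{\mu}^\star_c-\boldsymbol{\mu}^\star_{c'}\|_2.$$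
   Context: $\mathbf{1}$ denotes the all-ones vector in $\mathbb{R}^C$. The set $\mathcal{K}_{c,c'}$ is the set of noise vectors $\boldsymbol{z}$ for which the linear classifier with weight matrix $\boldsymbol{M}^\star$ and zero bias scores class $c'$ at least as high as class $c$ on the input $\boldsymbol{\mu}^\star_c+\boldsymbol{z}$. *)

theory Defs
  imports "HOL-Analysis.Analysis"
begin

definition Mstar :: "real ^ 'n ^ 'n" where
  "Mstar = (\<chi> i j. sqrt (real CARD('n) / (real CARD('n) - 1)) *
              ((if i = j then 1 else 0) - 1 / real CARD('n)))"

definition mustar :: "'n \<Rightarrow> real ^ 'n" where
  "mustar c = column c Mstar"

definition Kset :: "'n \<Rightarrow> 'n \<Rightarrow> (real ^ 'n) set" where
  "Kset c c' = {z. (Mstar *v (mustar c + z)) $ c' \<ge> (Mstar *v (mustar c + z)) $ c}"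

end

theory Submission
  imports Defs
begin

lemma normsq_sum: "(norm (x::real^'n))^2 = (\<Sum>i\<in>UNIV. (x$i)^2)"
  by (simp add: norm_eq_sqrt_inner inner_vec_def power2_eq_square sum_nonneg)

lemma Mv: "(Mstar *v v) $ i = sqrt (real CARD('n) / (real CARD('n) - 1)) * (v$i - (\<Sum>j\<in>UNIV. v$j) / real CARD('n))"
  for v :: "real^'n"
proof -
  let ?s = "sqrt (real CARD('n) / (real CARD('n) - 1))"
  have "(Mstar *v v) $ i = (\<Sum>j\<in>UNIV. ?s * ((if i = j then 1 else 0) - 1 / real CARD('n)) * v$j)"
    by (simp add: Mstar_def matrix_vector_mult_def)
  also have "\<dots> = (\<Sum>j\<in>UNIV. ?s * (if i = j then v$j else 0) - ?s / real CARD('n) * v$j)"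
    by (intro sum.cong) (auto simp: algebra_simps)
  also have "\<dots> = ?s * ((\<Sum>j\<in>UNIV. (if i = j then v$j else 0)) - (\<Sum>j\<in>UNIV. v$j) / real CARD('n))"
    by (simp only: sum_subtractf sum_distrib_left[symmetric] right_diff_distrib) (simp add: sum_divide_distrib sum_distrib_left)
  also have "\<dots> = ?s * (v$i - (\<Sum>j\<in>UNIV. v$j) / real CARD('n))" by simp
  finally show ?thesis .
qed

lemma mu: "mustar c $ k = sqrt (real CARD('n) / (real CARD('n) - 1)) * ((if k = c then 1 else 0) - 1 / real CARD('n))"
  for c k :: "'n::finite"
  by (simp add: mustar_def column_def Mstar_def)

theorem lemma12:
  fixes c c' :: "'n::finite" and z :: "real ^ 'n"
  assumes "CARD('n) \<ge> 2"
    and "c \<noteq> c'"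
    and "z \<in> Kset c c'"
    and "\<forall>w \<in> Kset c c'. (1/2) * (norm z)^2 \<le> (1/2) * (norm w)^2"
  shows "norm z = (1/2) * norm (mustar c - mustar c')"
proof -
  define s where "s = sqrt (real CARD('n) / (real CARD('n) - 1))"
  have spos: "s > 0" using assms(1) unfolding s_def by simp
  have Kiff: "w \<in> Kset c c' \<longleftrightarrow> w$c' - w$c \<ge> s" for w
  proof -
    let ?S = "(\<Sum>j\<in>UNIV. (mustar c + w)$j) / real CARD('n)"
    have "w \<in> Kset c c' \<longleftrightarrow> s * ((mustar c + w)$c' - ?S) \<ge> s * ((mustar c + w)$c - ?S)"
      unfolding Kset_def by (simp add: Mv s_def)
    also have "\<dots> \<longleftrightarrow> (mustar c + w)$c' \<ge> (mustar c + w)$c"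
      using spos by (simp add: mult_le_cancel_left_pos)
    also have "\<dots> \<longleftrightarrow> w$c' - w$c \<ge> s"
      using assms(2) by (simp add: mu s_def[symmetric] algebra_simps)
    finally show ?thesis .
  qed
  have zc: "z$c' - z$c \<ge> s" using assms(3) Kiff by blast
  have lb: "(norm z)^2 \<ge> s^2/2"
  proof -
    have "(norm z)^2 \<ge> (\<Sum>i\<in>{c,c'}. (z$i)^2)"
      unfolding normsq_sum by (rule sum_mono2) auto
    also have "(\<Sum>i\<in>{c,c'}. (z$i)^2) = (z$c)^2 + (z$c')^2" using assms(2) by simp
    finally have a: "(norm z)^2 \<ge> (z$c)^2 + (z$c')^2" .
    have "(z$c)^2 + (z$c')^2 \<ge> (z$c' - z$c)^2/2"
    proof -
      have "(z$c)^2 + (z$c')^2 - (z$c' - z$c)^2/2 = (z$c + z$c')^2/2"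
        by (simp add: power2_eq_square field_simps)
      moreover have "(z$c + z$c')^2/2 \<ge> 0" by simp
      ultimately show ?thesis by linarith
    qed
    moreover have "(z$c' - z$c)^2 \<ge> s^2" using zc spos
      by (intro power_mono) auto
    ultimately show ?thesis using a by linarith
  qed
  define w :: "real^'n" where "w = (\<chi> k. if k = c' then s/2 else if k = c then -s/2 else 0)"
  have wK: "w \<in> Kset c c'" using Kiff assms(2) by (simp add: w_def)
  have wn: "(norm w)^2 = s^2/2"
  proof -
    have "(norm w)^2 = (\<Sum>i\<in>UNIV. (if i = c' then (s/2)^2 else 0) + (if i = c then (s/2)^2 else 0))"
      unfolding normsq_sum w_def using assms(2) by (intro sum.cong) auto
    also have "\<dots> = s^2/2" by (simp add: sum.distrib power2_eq_square)
    finally show ?thesis .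
  qed
  have "(1/2) * (norm z)^2 \<le> (1/2) * (norm w)^2" using assms(4) wK by blast
  then have zn: "(norm z)^2 = s^2/2" using lb wn by linarith
  have dn: "(norm (mustar c - mustar c'))^2 = 2 * s^2"
  proof -
    have "(norm (mustar c - mustar c'))^2 = (\<Sum>i\<in>UNIV. (if i = c then s^2 else 0) + (if i = c' then s^2 else 0))"
      unfolding normsq_sum using assms(2)
      by (intro sum.cong) (auto simp: mu s_def[symmetric] algebra_simps power2_eq_square)
    also have "\<dots> = 2 * s^2" by (simp add: sum.distrib)
    finally show ?thesis .
  qed
  have "(norm z)^2 = ((1/2) * norm (mustar c - mustar c'))^2"
    using zn dn by (simp add: power_mult_distrib power2_eq_square)
  then show ?thesis
    by (simp add: power2_eq_iff_nonneg)
qed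

end
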